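(* Let $\mathcal{M}=(W,\leq,R,V^+,V^-)$ be a Nelsonian conditional model and define $\mathcal{M}^i=(W^i,\leq^i,R^i,V^i)$ by: $W^i:=W\cup R$; $\leq^i:=\leq\cup\{((w,(X,Y),v),(w',(X,Y),v'))\mid w\leq w',\,v\leq v'\}$ (for triples in $R$); $R^i:=\{(w,X',(w,(X,Y),v)),((w,(X,Y),v),Y',v)\mid (w,(X,Y),v)\in R,\,X'\cap W=X,\,Y'\cap W=Y\}$; $V^i(p_i):=V^+(p_i)$ and $V^i(q_i):=V^-(p_i)$. Then (1) $\mathcal{M}^i$ is an extended conditional intuitionistic model, and (2) for every $w\in W$ and every $\phi\in\mathcal{L}_{\Box\!\!\rightarrow}$, $\mathcal{M},w\models^+\phi$ iff $\mathcal{M}^i,w\models^i E^\pm(\phi)$.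
   Context: $\mathcal{L}_{\Box\!\!\rightarrow}$ is built from variables $p_0,p_1,\dots$ with $\wedge,\vee,\to$, strong negation $\sim$, and a binary would-conditional $\Box\!\!\rightarrow$. A Nelsonian conditional model is $(W,\leq,R,V^+,V^-)$ with $W\neq\emptyset$, $\leq$ a preorder, $V^\pm$ assigning upward-closed sets to variables, $R\subseteq W\times(\mathcal{P}(W)\times\mathcal{P}(W))\times W$ satisfying for all $X,Y$: (c1) $w\leq w'$ and $R_{(X,Y)}(w,v)$ imply $R_{(X,Y)}(w',v')$ for some $v'\geq v$; (c2) $R_{(X,Y)}(w,v)$ and $v\leq v'$ imply $R_{(X,Y)}(w',v')$ for some $w'\geq w$. Verification $\models^+$/falsification $\models^-$: atoms by $V^\pm$; $\wedge$ verified iff both verified, falsified iff one falsified; $\vee$ dually; $\sim$ swaps; $w\models^+\psi\to\chi$ iff for all $v\geq w$, $v\models^+\psi$ implies $v\models^+\chi$; $w\models^-\psi\to\chi$ iff $w\models^+\psi$ and $w\models^-\chi$; $w\models^+\psi\Box\!\!\rightarrow\chi$ iff for all $v\geq w$ and $u$ with $R_{\|\psi\|}(v,u)$, $u\models^+\chi$; $w\models^-\psi\Box\!\!\rightarrow\chi$ iff some $u$ has $R_{\|\psi\|}(w,u)$ and $u\models^-\chi$; $\|\psi\|=(\{w\mid w\models^+\psi\},\{w\mid w\models^-\psi\})$. The target language $\mathcal{L}^{e+}_{(\Box\!\!\rightarrow,\Diamond\!\!\rightarrow)}$ has variables $p_i$ and extra variables $q_i$, connectives $\wedge,\vee,\to$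 and primitive binary $\Box\!\!\rightarrow$, $\Diamond\!\!\rightarrow$ (no negation). An extended conditional intuitionistic model is $(W,\leq,R,V)$ with $\leq$ a preorder, $V$ assigning upward-closed sets to all $p_i,q_i$, $R\subseteq W\times\mathcal{P}(W)\times W$ such that for all $X$: if $w\leq w'$ and $R_X(w,v)$ then $R_X(w',v')$ for some $v'\geq v$; if $R_X(w,v)$ and $v\leq v'$ then $R_X(w',v')$ for some $w'\geq w$. $\models^i$: atoms by $V$; $\wedge,\vee$ classical at a point; $w\models^i\psi\to\chi$ iff for all $v\geq w$, $v\models^i\psi$ implies $v\models^i\chi$; $w\models^i\psi\Box\!\!\rightarrow\chi$ iff for all $v\geq w$ and $u$ with $R_{\|\psi\|^i}(v,u)$, $u\models^i\chi$; $w\models^i\psi\Diamond\!\!\rightarrow\chi$ iff some $u$ has $R_{\|\psi\|^i}(w,u)$ and $u\models^i\chi$; $\|\psi\|^i=\{w\mid w\models^i\psi\}$. The translation $E^\pm$: $E^\pm(p_i)=p_i$, $E^\pm(\sim p_i)=q_i$, $E^\pm(\phi\wedge\psi)=E^\pm(\phi)\wedge E^\pm(\psi)$, $E^\pm(\sim(\phi\wedge\psi))=E^\pm(\sim\phi)\vee E^\pm(\sim\psi)$, $E^\pm(\phi\vee\psi)=E^\pm(\phi)\vee E^\pm(\psi)$, $E^\pm(\sim(\phi\vee\psi))=E^\pm(\sim\phi)\wedge E^\pm(\sim\psi)$, $E^\pm(\sim\sim\phi)=E^\pm(\phi)$, $E^\pm(\phi\to\psi)=E^\pm(\phi)\to E^\pm(\psi)$,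 $E^\pm(\sim(\phi\to\psi))=E^\pm(\phi)\wedge E^\pm(\sim\psi)$, $E^\pm(\phi\Box\!\!\rightarrow\psi)=E^\pm(\phi)\Box\!\!\rightarrow(E^\pm(\sim\phi)\Box\!\!\rightarrow E^\pm(\psi))$, $E^\pm(\sim(\phi\Box\!\!\rightarrow\psi))=E^\pm(\phi)\Diamond\!\!\rightarrow(E^\pm(\sim\phi)\Diamond\!\!\rightarrow E^\pm(\sim\psi))$. *)

theory Defs
  imports Main
begin

datatype form =
    Var nat
  | Neg form            (* strong negation ~ *)
  | And form form
  | Or form form
  | Imp form form
  | Cond form form

type_synonym 'w ntriple = "'w \<times> ('w set \<times> 'w set) \<times> 'w"

definition nelson_model ::
  "'w set \<Rightarrow> ('w \<times> 'w) set \<Rightarrow> 'w ntriple set \<Rightarrow> (nat \<Rightarrow> 'w set) \<Rightarrow> (nat \<Rightarrow> 'w set) \<Rightarrow> bool"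
where
  "nelson_model W le R Vp Vm \<longleftrightarrow>
     W \<noteq> {} \<and>
     le \<subseteq> W \<times> W \<and> (\<forall>w\<in>W. (w, w) \<in> le) \<and> trans le \<and>
     (\<forall>i. Vp i \<subseteq> W \<and> (\<forall>w w'. w \<in> Vp i \<and> (w, w') \<in> le \<longrightarrow> w' \<in> Vp i)) \<and>
     (\<forall>i. Vm i \<subseteq> W \<and> (\<forall>w w'. w \<in> Vm i \<and> (w, w') \<in> le \<longrightarrow> w' \<in> Vm i)) \<and>
     R \<subseteq> W \<times> (Pow W \<times> Pow W) \<times> W \<and>
     (\<forall>X Y w w' v. (w, w') \<in> le \<and> (w, (X, Y), v) \<in> R \<longrightarrow>
         (\<exists>v'. (v, v') \<in> le \<and> (w', (X, Y), v') \<in> R)) \<and>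
     (\<forall>X Y w v v'. (w, (X, Y), v) \<in> R \<and> (v, v') \<in> le \<longrightarrow>
         (\<exists>w'. (w, w') \<in> le \<and> (w', (X, Y), v') \<in> R))"

text \<open>Verification (pol = True) and falsification (pol = False).\<close>
primrec nsem ::
  "'w set \<Rightarrow> ('w \<times> 'w) set \<Rightarrow> 'w ntriple set \<Rightarrow> (nat \<Rightarrow> 'w set) \<Rightarrow> (nat \<Rightarrow> 'w set)
   \<Rightarrow> form \<Rightarrow> bool \<Rightarrow> 'w \<Rightarrow> bool"
where
  "nsem W le R Vp Vm (Var i) pol w = (if pol then w \<in> Vp i else w \<in> Vm i)"
| "nsem W le R Vp Vm (Neg a) pol w = nsem W le R Vp Vm a (\<not> pol) w"
| "nsem W le R Vp Vm (And a b) pol w =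
     (if pol then nsem W le R Vp Vm a True w \<and> nsem W le R Vp Vm b True w
      else nsem W le R Vp Vm a False w \<or> nsem W le R Vp Vm b False w)"
| "nsem W le R Vp Vm (Or a b) pol w =
     (if pol then nsem W le R Vp Vm a True w \<or> nsem W le R Vp Vm b True w
      else nsem W le R Vp Vm a False w \<and> nsem W le R Vp Vm b False w)"
| "nsem W le R Vp Vm (Imp a b) pol w =
     (if pol then (\<forall>v. (w, v) \<in> le \<longrightarrow> nsem W le R Vp Vm a True v \<longrightarrow> nsem W le R Vp Vm b True v)
      else nsem W le R Vp Vm a True w \<and> nsem W le R Vp Vm b False w)"
| "nsem W le R Vp Vm (Cond a b) pol w =
     (let X = {x \<in> W. nsem W le R Vp Vm a True x}; Y = {x \<in> W. nsem W le R Vp Vm a False x} in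
      if pol then (\<forall>v u. (w, v) \<in> le \<and> (v, (X, Y), u) \<in> R \<longrightarrow> nsem W le R Vp Vm b True u)
      else (\<exists>u. (w, (X, Y), u) \<in> R \<and> nsem W le R Vp Vm b False u))"

datatype iatom = PA nat | QA nat

datatype iform =
    IP nat | IQ nat
  | IAnd iform iform | IOr iform iform | IImp iform iform
  | IBox iform iform | IDia iform iform

definition ecim ::
  "'a set \<Rightarrow> ('a \<times> 'a) set \<Rightarrow> ('a \<times> 'a set \<times> 'a) set \<Rightarrow> (iatom \<Rightarrow> 'a set) \<Rightarrow> bool"
where
  "ecim W le R V \<longleftrightarrow>
     W \<noteq> {} \<and>
     le \<subseteq> W \<times> W \<and> (\<forall>w\<in>W. (w, w) \<in> le) \<and> trans le \<and>
     (\<forall>a. V a \<subseteq> W \<and> (\<forall>w w'. w \<in> V a \<and> (w, w') \<in> le \<longrightarrow> w' \<in> V a)) \<and>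
     R \<subseteq> W \<times> Pow W \<times> W \<and>
     (\<forall>X w w' v. (w, w') \<in> le \<and> (w, X, v) \<in> R \<longrightarrow>
         (\<exists>v'. (v, v') \<in> le \<and> (w', X, v') \<in> R)) \<and>
     (\<forall>X w v v'. (w, X, v) \<in> R \<and> (v, v') \<in> le \<longrightarrow>
         (\<exists>w'. (w, w') \<in> le \<and> (w', X, v') \<in> R))"

primrec isem ::
  "'a set \<Rightarrow> ('a \<times> 'a) set \<Rightarrow> ('a \<times> 'a set \<times> 'a) set \<Rightarrow> (iatom \<Rightarrow> 'a set) \<Rightarrow> iform \<Rightarrow> 'a \<Rightarrow> bool"
where
  "isem W le R V (IP i) w = (w \<in> V (PA i))"
| "isem W le R V (IQ i) w = (w \<in> V (QA i))"
| "isem W le R V (IAnd a b) w = (isem W le R V a w \<and> isem W le R V b w)"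
| "isem W le R V (IOr a b) w = (isem W le R V a w \<or> isem W le R V b w)"
| "isem W le R V (IImp a b) w =
     (\<forall>v. (w, v) \<in> le \<longrightarrow> isem W le R V a v \<longrightarrow> isem W le R V b v)"
| "isem W le R V (IBox a b) w =
     (let X = {x \<in> W. isem W le R V a x} in
      \<forall>v u. (w, v) \<in> le \<and> (v, X, u) \<in> R \<longrightarrow> isem W le R V b u)"
| "isem W le R V (IDia a b) w =
     (let X = {x \<in> W. isem W le R V a x} in
      \<exists>u. (w, X, u) \<in> R \<and> isem W le R V b u)"

fun fweight :: "form \<Rightarrow> nat" where
  "fweight (Var i) = 1"
| "fweight (Neg a) = fweight a + 1"
| "fweight (And a b) = fweight a + fweight b + 2"
| "fweight (Or a b) = fweight a + fweight b + 2"
| "fweight (Imp a b) = fweight a + fweight b + 2"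
| "fweight (Cond a b) = fweight a + fweight b + 2"

function Etr :: "form \<Rightarrow> iform" where
  "Etr (Var i) = IP i"
| "Etr (Neg (Var i)) = IQ i"
| "Etr (And a b) = IAnd (Etr a) (Etr b)"
| "Etr (Neg (And a b)) = IOr (Etr (Neg a)) (Etr (Neg b))"
| "Etr (Or a b) = IOr (Etr a) (Etr b)"
| "Etr (Neg (Or a b)) = IAnd (Etr (Neg a)) (Etr (Neg b))"
| "Etr (Neg (Neg a)) = Etr a"
| "Etr (Imp a b) = IImp (Etr a) (Etr b)"
| "Etr (Neg (Imp a b)) = IAnd (Etr a) (Etr (Neg b))"
| "Etr (Cond a b) = IBox (Etr a) (IBox (Etr (Neg a)) (Etr b))"
| "Etr (Neg (Cond a b)) = IDia (Etr a) (IDia (Etr (Neg a)) (Etr (Neg b)))"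
  by pat_completeness auto
termination by (relation "measure fweight") auto

section \<open>The model M^i; worlds are Inl w (w in W) and Inr t (t a triple in R)\<close>

type_synonym 'w iworld = "'w + 'w ntriple"

definition Wi :: "'w set \<Rightarrow> 'w ntriple set \<Rightarrow> 'w iworld set" where
  "Wi W R = Inl ` W \<union> Inr ` R"

definition lei :: "('w \<times> 'w) set \<Rightarrow> 'w ntriple set \<Rightarrow> ('w iworld \<times> 'w iworld) set" where
  "lei le R =
     {(Inl a, Inl b) | a b. (a, b) \<in> le} \<union>
     {(Inr (w, (X, Y), v), Inr (w', (X, Y), v')) | w X Y v w' v'.
        (w, (X, Y), v) \<in> R \<and> (w', (X, Y), v') \<in> R \<and> (w, w') \<in> le \<and> (v, v') \<in> le}"

definition Ri :: "'w set \<Rightarrow> 'w ntriple set \<Rightarrow> ('w iworld \<times> 'w iworld set \<times> 'w iworld) set" where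
  "Ri W R =
     {(Inl w, X', Inr (w, (X, Y), v)) | w X Y v X'.
        (w, (X, Y), v) \<in> R \<and> X' \<subseteq> Wi W R \<and> {x. Inl x \<in> X'} = X} \<union>
     {(Inr (w, (X, Y), v), Y', Inl v) | w X Y v Y'.
        (w, (X, Y), v) \<in> R \<and> Y' \<subseteq> Wi W R \<and> {x. Inl x \<in> Y'} = Y}"

fun Vi :: "(nat \<Rightarrow> 'w set) \<Rightarrow> (nat \<Rightarrow> 'w set) \<Rightarrow> iatom \<Rightarrow> 'w iworld set" where
  "Vi Vp Vm (PA i) = Inl ` Vp i"
| "Vi Vp Vm (QA i) = Inl ` Vm i"

end

theory Submission
  imports Defs
begin

lemma lei_Inl: "((Inl a, y) \<in> lei le R) \<longleftrightarrow> (\<exists>b. y = Inl b \<and> (a, b) \<in> le)"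
  unfolding lei_def by auto

lemma lei_Inr: "((Inr (w, (X, Y), v), y) \<in> lei le R) \<longleftrightarrow>
   (\<exists>w' v'. y = Inr (w', (X, Y), v') \<and> (w, (X, Y), v) \<in> R \<and> (w', (X, Y), v') \<in> R \<and> (w, w') \<in> le \<and> (v, v') \<in> le)"
  unfolding lei_def by auto

lemma Ri_Inl: "((Inl w, X', u) \<in> Ri W R) \<longleftrightarrow>
   (\<exists>X Y v. u = Inr (w, (X, Y), v) \<and> (w, (X, Y), v) \<in> R \<and> X' \<subseteq> Wi W R \<and> {x. Inl x \<in> X'} = X)"
  unfolding Ri_def by auto

lemma Ri_Inr: "((Inr (w, (X, Y), v), Y', u) \<in> Ri W R) \<longleftrightarrow>
   (u = Inl v \<and> (w, (X, Y), v) \<in> R \<and> Y' \<subseteq> Wi W R \<and> {x. Inl x \<in> Y'} = Y)"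
  unfolding Ri_def by auto

lemma Inl_Wi: "(Inl x \<in> Wi W R) = (x \<in> W)"
  unfolding Wi_def by auto

lemma nm_D:
  assumes M: "nelson_model W le R Vp Vm"
  shows "W \<noteq> {}" and "le \<subseteq> W \<times> W" and "\<forall>w\<in>W. (w, w) \<in> le"
    and "trans le"
    and "\<forall>i. Vp i \<subseteq> W \<and> (\<forall>w w'. w \<in> Vp i \<and> (w, w') \<in> le \<longrightarrow> w' \<in> Vp i)"
    and "\<forall>i. Vm i \<subseteq> W \<and> (\<forall>w w'. w \<in> Vm i \<and> (w, w') \<in> le \<longrightarrow> w' \<in> Vm i)"
    and "R \<subseteq> W \<times> (Pow W \<times> Pow W) \<times> W"
    and "\<forall>X Y w w' v. (w, w') \<in> le \<and> (w, (X, Y), v) \<in> R \<longrightarrow>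
         (\<exists>v'. (v, v') \<in> le \<and> (w', (X, Y), v') \<in> R)"
    and "\<forall>X Y w v v'. (w, (X, Y), v) \<in> R \<and> (v, v') \<in> le \<longrightarrow>
         (\<exists>w'. (w, w') \<in> le \<and> (w', (X, Y), v') \<in> R)"
  using M unfolding nelson_model_def by simp_all

lemma ecim_part:
  assumes M: "nelson_model W le R Vp Vm"
  shows "ecim (Wi W R) (lei le R) (Ri W R) (Vi Vp Vm)"
proof -
  from M have ne: "W \<noteq> {}" and leW: "le \<subseteq> W \<times> W" and refl: "\<forall>w\<in>W. (w, w) \<in> le"
    and tr: "trans le"
    and Vp: "\<forall>i. Vp i \<subseteq> W \<and> (\<forall>w w'. w \<in> Vp i \<and> (w, w') \<in> le \<longrightarrow> w' \<in> Vp i)"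
    and Vm: "\<forall>i. Vm i \<subseteq> W \<and> (\<forall>w w'. w \<in> Vm i \<and> (w, w') \<in> le \<longrightarrow> w' \<in> Vm i)"
    and RW: "R \<subseteq> W \<times> (Pow W \<times> Pow W) \<times> W"
    and c1: "\<forall>X Y w w' v. (w, w') \<in> le \<and> (w, (X, Y), v) \<in> R \<longrightarrow>
         (\<exists>v'. (v, v') \<in> le \<and> (w', (X, Y), v') \<in> R)"
    and c2: "\<forall>X Y w v v'. (w, (X, Y), v) \<in> R \<and> (v, v') \<in> le \<longrightarrow>
         (\<exists>w'. (w, w') \<in> le \<and> (w', (X, Y), v') \<in> R)"
    using nm_D[OF M] by simp_all
  have "Wi W R \<noteq> {}" using ne unfolding Wi_def by auto
  moreover have "lei le R \<subseteq> Wi W R \<times> Wi W R"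
    using leW unfolding lei_def Wi_def by (auto simp: image_iff)
  moreover have "\<forall>x\<in>Wi W R. (x, x) \<in> lei le R"
  proof
    fix x assume "x \<in> Wi W R"
    then show "(x, x) \<in> lei le R"
    proof (cases x)
      case (Inl a) then show ?thesis using \<open>x \<in> Wi W R\<close> refl by (auto simp: lei_Inl Inl_Wi)
    next
      case (Inr t)
      then obtain w X Y v where t: "t = (w, (X, Y), v)" by (cases t) auto
      with Inr \<open>x \<in> Wi W R\<close> have "t \<in> R" unfolding Wi_def by auto
      with t RW have "w \<in> W" "v \<in> W" by auto
      then show ?thesis using Inr t \<open>t \<in> R\<close> refl by (auto simp: lei_Inr)
    qed
  qed
  moreover have "trans (lei le R)"
    using tr unfolding trans_def lei_def by blast
  moreover have "\<forall>a. Vi Vp Vm a \<subseteq> Wi W R \<and> (\<forall>w w'. w \<in> Vi Vp Vm a \<and> (w, w') \<in> lei le R \<longrightarrow> w' \<in> Vi Vp Vm a)"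
  proof
    fix a show "Vi Vp Vm a \<subseteq> Wi W R \<and> (\<forall>w w'. w \<in> Vi Vp Vm a \<and> (w, w') \<in> lei le R \<longrightarrow> w' \<in> Vi Vp Vm a)"
      using Vp Vm by (cases a) (auto simp: Wi_def lei_Inl subset_eq)
  qed
  moreover have "Ri W R \<subseteq> Wi W R \<times> Pow (Wi W R) \<times> Wi W R"
    using RW unfolding Ri_def Wi_def by (auto simp: image_iff)
  moreover have "\<forall>X w w' v. (w, w') \<in> lei le R \<and> (w, X, v) \<in> Ri W R \<longrightarrow>
         (\<exists>v'. (v, v') \<in> lei le R \<and> (w', X, v') \<in> Ri W R)"
  proof (intro allI impI, elim conjE)
    fix X w w' v assume a1: "(w, w') \<in> lei le R" and a2: "(w, X, v) \<in> Ri W R"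
    show "\<exists>v'. (v, v') \<in> lei le R \<and> (w', X, v') \<in> Ri W R"
    proof (cases w)
      case (Inl a)
      with a1 obtain b where b: "w' = Inl b" "(a, b) \<in> le" by (auto simp: lei_Inl)
      from a2 Inl obtain X0 Y0 v0 where v: "v = Inr (a, (X0, Y0), v0)" "(a, (X0, Y0), v0) \<in> R"
        "X \<subseteq> Wi W R" "{x. Inl x \<in> X} = X0" by (auto simp: Ri_Inl)
      from c1 b v obtain v' where "(v0, v') \<in> le" "(b, (X0, Y0), v') \<in> R" by blast
      then show ?thesis using b v
        by (intro exI[of _ "Inr (b, (X0, Y0), v')"]) (auto simp: lei_Inr Ri_Inl)
    next
      case (Inr t)
      then obtain a X0 Y0 v0 where t: "w = Inr (a, (X0, Y0), v0)" by (cases t) auto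
      with a1 obtain a' v0' where w': "w' = Inr (a', (X0, Y0), v0')" "(a, (X0, Y0), v0) \<in> R"
        "(a', (X0, Y0), v0') \<in> R" "(a, a') \<in> le" "(v0, v0') \<in> le" by (auto simp: lei_Inr)
      from a2 t have v: "v = Inl v0" "X \<subseteq> Wi W R" "{x. Inl x \<in> X} = Y0" by (auto simp: Ri_Inr)
      show ?thesis using w' v
        by (intro exI[of _ "Inl v0'"]) (auto simp: lei_Inl Ri_Inr)
    qed
  qed
  moreover have "\<forall>X w v v'. (w, X, v) \<in> Ri W R \<and> (v, v') \<in> lei le R \<longrightarrow>
         (\<exists>w'. (w, w') \<in> lei le R \<and> (w', X, v') \<in> Ri W R)"
  proof (intro allI impI, elim conjE)
    fix X w v v' assume a2: "(w, X, v) \<in> Ri W R" and a1: "(v, v') \<in> lei le R"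
    show "\<exists>w'. (w, w') \<in> lei le R \<and> (w', X, v') \<in> Ri W R"
    proof (cases w)
      case (Inl a)
      from a2 Inl obtain X0 Y0 v0 where v: "v = Inr (a, (X0, Y0), v0)" "(a, (X0, Y0), v0) \<in> R"
        "X \<subseteq> Wi W R" "{x. Inl x \<in> X} = X0" by (auto simp: Ri_Inl)
      with a1 obtain a' v0' where w': "v' = Inr (a', (X0, Y0), v0')"
        "(a', (X0, Y0), v0') \<in> R" "(a, a') \<in> le" "(v0, v0') \<in> le" by (auto simp: lei_Inr)
      show ?thesis using w' v Inl
        by (intro exI[of _ "Inl a'"]) (auto simp: lei_Inl Ri_Inl)
    next
      case (Inr t)
      then obtain a X0 Y0 v0 where t: "w = Inr (a, (X0, Y0), v0)" by (cases t) auto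
      from a2 t have v: "v = Inl v0" "(a, (X0, Y0), v0) \<in> R" "X \<subseteq> Wi W R" "{x. Inl x \<in> X} = Y0"
        by (auto simp: Ri_Inr)
      with a1 obtain b where b: "v' = Inl b" "(v0, b) \<in> le" by (auto simp: lei_Inl)
      from c2 b v obtain a' where "(a, a') \<in> le" "(a', (X0, Y0), b) \<in> R" by blast
      then show ?thesis using t b v
        by (intro exI[of _ "Inr (a', (X0, Y0), b)"]) (auto simp: lei_Inr Ri_Inr)
    qed
  qed
  ultimately show ?thesis unfolding ecim_def by blast
qed


lemma transl:
  assumes M: "nelson_model W le R Vp Vm"
  shows "\<forall>w\<in>W. (nsem W le R Vp Vm \<phi> True w \<longleftrightarrow> isem (Wi W R) (lei le R) (Ri W R) (Vi Vp Vm) (Etr \<phi>) (Inl w))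
              \<and> (nsem W le R Vp Vm \<phi> False w \<longleftrightarrow> isem (Wi W R) (lei le R) (Ri W R) (Vi Vp Vm) (Etr (Neg \<phi>)) (Inl w))"
proof (induction \<phi>)
  case (Var i)
  then show ?case by (auto simp: image_iff)
next
  case (Neg a)
  then show ?case by simp
next
  case (And a b)
  then show ?case by simp
next
  case (Or a b)
  then show ?case by simp
next
  case (Imp a b)
  have leW: "le \<subseteq> W \<times> W" using nm_D(2)[OF M] .
  show ?case
  proof
    fix w assume w: "w \<in> W"
    show "(nsem W le R Vp Vm (Imp a b) True w \<longleftrightarrow> isem (Wi W R) (lei le R) (Ri W R) (Vi Vp Vm) (Etr (Imp a b)) (Inl w))
              \<and> (nsem W le R Vp Vm (Imp a b) False w \<longleftrightarrow> isem (Wi W R) (lei le R) (Ri W R) (Vi Vp Vm) (Etr (Neg (Imp a b))) (Inl w))"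
      using Imp.IH w leW by (auto simp: lei_Inl)
  qed
next
  case (Cond a b)
  let ?S = "isem (Wi W R) (lei le R) (Ri W R) (Vi Vp Vm)"
  let ?N = "nsem W le R Vp Vm"
  define XA where "XA = {x \<in> Wi W R. ?S (Etr a) x}"
  define XB where "XB = {x \<in> Wi W R. ?S (Etr (Neg a)) x}"
  define Xn where "Xn = {x \<in> W. ?N a True x}"
  define Yn where "Yn = {x \<in> W. ?N a False x}"
  have leW: "le \<subseteq> W \<times> W" and refl: "\<forall>w\<in>W. (w, w) \<in> le"
    and tr: "trans le"
    and RW: "R \<subseteq> W \<times> (Pow W \<times> Pow W) \<times> W"
    using nm_D[OF M] by simp_all
  have XAn: "{x. Inl x \<in> XA} = Xn" using Cond.IH(1) unfolding XA_def Xn_def by (auto simp: Inl_Wi)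
  have XBn: "{x. Inl x \<in> XB} = Yn" using Cond.IH(1) unfolding XB_def Yn_def by (auto simp: Inl_Wi)
  have XAW: "XA \<subseteq> Wi W R" "XB \<subseteq> Wi W R" unfolding XA_def XB_def by auto
  show ?case
  proof
    fix w assume w: "w \<in> W"
    have T: "?N (Cond a b) True w \<longleftrightarrow> ?S (Etr (Cond a b)) (Inl w)"
    proof
      assume H: "?N (Cond a b) True w"
      hence H': "\<And>v u. (w, v) \<in> le \<Longrightarrow> (v, (Xn, Yn), u) \<in> R \<Longrightarrow> ?N b True u"
        unfolding Xn_def Yn_def by (simp add: Let_def)
      show "?S (Etr (Cond a b)) (Inl w)"
        unfolding Etr.simps isem.simps Let_def XA_def[symmetric] XB_def[symmetric]
      proof (rule allI, rule allI, rule impI, elim conjE)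
        fix x u assume x: "(Inl w, x) \<in> lei le R" and u: "(x, XA, u) \<in> Ri W R"
        from x obtain w' where w': "x = Inl w'" "(w, w') \<in> le" by (auto simp: lei_Inl)
        from u w' XAn obtain Y v where uu: "u = Inr (w', (Xn, Y), v)" "(w', (Xn, Y), v) \<in> R"
          by (auto simp: Ri_Inl)
        show "\<forall>y u'. (u, y) \<in> lei le R \<and> (y, XB, u') \<in> Ri W R \<longrightarrow> ?S (Etr b) u'"
        proof (intro allI impI, elim conjE)
          fix y u' assume y: "(u, y) \<in> lei le R" and u': "(y, XB, u') \<in> Ri W R"
          from y uu obtain w2 v2 where yy: "y = Inr (w2, (Xn, Y), v2)" "(w2, (Xn, Y), v2) \<in> R"
            "(w', w2) \<in> le" by (auto simp: lei_Inr)
          from u' yy XBn have "u' = Inl v2" "Y = Yn" by (auto simp: Ri_Inr)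
          have "(w, w2) \<in> le" using tr w'(2) yy(3) unfolding trans_def by blast
          hence "?N b True v2" using H' yy(2) \<open>Y = Yn\<close> by blast
          moreover have "v2 \<in> W" using yy(2) RW by auto
          ultimately show "?S (Etr b) u'" using Cond.IH(2) \<open>u' = Inl v2\<close> by blast
        qed
      qed
    next
      assume H: "?S (Etr (Cond a b)) (Inl w)"
      hence H': "\<And>x u. (Inl w, x) \<in> lei le R \<Longrightarrow> (x, XA, u) \<in> Ri W R \<Longrightarrow>
           (\<forall>y u'. (u, y) \<in> lei le R \<and> (y, XB, u') \<in> Ri W R \<longrightarrow> ?S (Etr b) u')"
        unfolding XA_def XB_def by (simp add: Let_def)
      have "\<forall>v u. (w, v) \<in> le \<and> (v, (Xn, Yn), u) \<in> R \<longrightarrow> ?N b True u"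
      proof (intro allI impI, elim conjE)
        fix v u assume v: "(w, v) \<in> le" and u: "(v, (Xn, Yn), u) \<in> R"
        have vu: "v \<in> W" "u \<in> W" using u RW by auto
        have "(Inl w, Inl v) \<in> lei le R" using v by (simp add: lei_Inl)
        moreover have "(Inl v, XA, Inr (v, (Xn, Yn), u)) \<in> Ri W R" using u XAn XAW by (simp add: Ri_Inl)
        moreover have "(Inr (v, (Xn, Yn), u), Inr (v, (Xn, Yn), u)) \<in> lei le R"
          using u vu refl by (simp add: lei_Inr)
        moreover have "(Inr (v, (Xn, Yn), u), XB, Inl u) \<in> Ri W R" using u XBn XAW by (simp add: Ri_Inr)
        ultimately have "?S (Etr b) (Inl u)" using H' by blast
        thus "?N b True u" using Cond.IH(2) vu by blast
      qed
      thus "?N (Cond a b) True w" unfolding Xn_def Yn_def by (simp add: Let_def)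
    qed
    have F: "?N (Cond a b) False w \<longleftrightarrow> ?S (Etr (Neg (Cond a b))) (Inl w)"
    proof
      assume "?N (Cond a b) False w"
      then obtain u where u: "(w, (Xn, Yn), u) \<in> R" "?N b False u"
        unfolding Xn_def Yn_def by (auto simp: Let_def)
      have uW: "u \<in> W" using u RW by auto
      have "(Inl w, XA, Inr (w, (Xn, Yn), u)) \<in> Ri W R" using u XAn XAW by (simp add: Ri_Inl)
      moreover have "(Inr (w, (Xn, Yn), u), XB, Inl u) \<in> Ri W R" using u XBn XAW by (simp add: Ri_Inr)
      moreover have "?S (Etr (Neg b)) (Inl u)" using Cond.IH(2) uW u by blast
      ultimately show "?S (Etr (Neg (Cond a b))) (Inl w)"
        unfolding Etr.simps isem.simps Let_def XA_def[symmetric] XB_def[symmetric] by blast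
    next
      assume "?S (Etr (Neg (Cond a b))) (Inl w)"
      then obtain x u where x: "(Inl w, XA, x) \<in> Ri W R" "(x, XB, u) \<in> Ri W R" "?S (Etr (Neg b)) u"
        unfolding Etr.simps isem.simps Let_def XA_def[symmetric] XB_def[symmetric] by blast
      from x(1) XAn obtain Y v where xx: "x = Inr (w, (Xn, Y), v)" "(w, (Xn, Y), v) \<in> R"
        by (auto simp: Ri_Inl)
      from x(2) xx XBn have "u = Inl v" "Y = Yn" by (auto simp: Ri_Inr)
      have vW: "v \<in> W" using xx RW by auto
      have "?N b False v" using Cond.IH(2) vW x(3) \<open>u = Inl v\<close> by blast
      thus "?N (Cond a b) False w" using xx \<open>Y = Yn\<close> unfolding Xn_def Yn_def by (auto simp: Let_def)
    qed
    show "(?N (Cond a b) True w \<longleftrightarrow> ?S (Etr (Cond a b)) (Inl w)) \<and>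
          (?N (Cond a b) False w \<longleftrightarrow> ?S (Etr (Neg (Cond a b))) (Inl w))" using T F by blast
  qed
qed

theorem lemma13:
  assumes "nelson_model W le R Vp Vm"
  shows "ecim (Wi W R) (lei le R) (Ri W R) (Vi Vp Vm) \<and>
         (\<forall>w\<in>W. \<forall>\<phi>. nsem W le R Vp Vm \<phi> True w \<longleftrightarrow>
                      isem (Wi W R) (lei le R) (Ri W R) (Vi Vp Vm) (Etr \<phi>) (Inl w))"
  using ecim_part[OF assms] transl[OF assms] by blast

end
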